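(* Let $a,b$ be Laurent polynomials with symmetry types $\mathrm{S}a(z)=\epsilon_az^{c_a}$ and $\mathrm{S}b(z)=\epsilon_bz^{c_b}$ ($\epsilon_a,\epsilon_b\in\{\pm1\}$, $c_a,c_b\in\mathbb Z$). Suppose $b\neq0$ and $\mathrm{len}(a)>\mathrm{len}(b)$. Then there exists a Laurent polynomial $q_1$ with symmetry such that $a_1(z):=a(z)-b(z)q_1(z)$ satisfies $\mathrm{len}(a_1)<\mathrm{len}(a)$ and $\mathrm{S}a_1(z)=\mathrm{S}a(z)=\mathrm{S}b(z)\,\mathrm{S}q_1(z)$.
   Context: Laurent polynomial $u(z)=\sum_ku(k)z^k$ with finitely many nonzero complex coefficients. $u$ has symmetry of type $\epsilon z^c$ if $u(z)=\epsilon z^cu(z^{-1})$; for nonzero $u$, $\mathrm{S}u(z):=u(z)/u(z^{-1})$; the zero polynomial has symmetry of every type. For nonzero $u$, $\mathrm{len}(u):=\max\{k:u(k)\ne0\}-\min\{k:u(k)\neq0\}$, and $\mathrm{len}(0):=-\infty$. *)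

theory Defs
  imports Complex_Main "HOL-Library.Extended_Real"
begin

text \<open>A Laurent polynomial u(z) = sum_k u(k) z^k is represented by its coefficient
function u :: int => complex, required to have finite support.\<close>

definition laurent_poly :: "(int \<Rightarrow> complex) \<Rightarrow> bool" where
  "laurent_poly u \<longleftrightarrow> finite {k. u k \<noteq> 0}"

text \<open>u has symmetry of type eps z^c iff u(z) = eps z^c u(z^{-1});
comparing coefficients of z^k this says u(k) = eps u(c - k) for all k.
The zero polynomial has symmetry of every type.  For nonzero u this is
exactly the statement S u(z) = u(z)/u(z^{-1}) = eps z^c.\<close>

definition has_symmetry :: "complex \<Rightarrow> int \<Rightarrow> (int \<Rightarrow> complex) \<Rightarrow> bool" where
  "has_symmetry \<epsilon> c u \<longleftrightarrow> (\<forall>k. u k = \<epsilon> * u (c - k))"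

definition lmult :: "(int \<Rightarrow> complex) \<Rightarrow> (int \<Rightarrow> complex) \<Rightarrow> (int \<Rightarrow> complex)" where
  "lmult u v = (\<lambda>k. \<Sum>j\<in>{j. u j \<noteq> 0}. u j * v (k - j))"

definition len :: "(int \<Rightarrow> complex) \<Rightarrow> ereal" where
  "len u = (if u = (\<lambda>_. 0) then -\<infinity>
            else ereal (real_of_int (Max {k. u k \<noteq> 0} - Min {k. u k \<noteq> 0})))"

end

theory Submission
  imports Defs
begin

lemma supp_sym:
  assumes "has_symmetry e c u" "e \<noteq> 0"
  shows "u k \<noteq> 0 \<longleftrightarrow> u (c - k) \<noteq> 0"
  using assms unfolding has_symmetry_def by (metis mult_eq_0_iff)

lemma max_min_sym:
  assumes "laurent_poly u" "u \<noteq> (\<lambda>_. 0)" "has_symmetry e c u" "e \<noteq> 0"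
  shows "Max {k. u k \<noteq> 0} + Min {k. u k \<noteq> 0} = c"
proof -
  let ?S = "{k. u k \<noteq> 0}"
  have f: "finite ?S" using assms(1) unfolding laurent_poly_def .
  have ne: "?S \<noteq> {}" using assms(2) by auto
  have M: "Max ?S \<in> ?S" "Min ?S \<in> ?S" using Max_in[OF f ne] Min_in[OF f ne] by auto
  have "c - Min ?S \<in> ?S" using M supp_sym[OF assms(3,4)] by (metis (mono_tags) mem_Collect_eq)
  hence 1: "c - Min ?S \<le> Max ?S" using f by auto
  have "c - Max ?S \<in> ?S" using M supp_sym[OF assms(3,4)] by (metis (mono_tags) mem_Collect_eq)
  hence 2: "Min ?S \<le> c - Max ?S" using f by auto
  show ?thesis using 1 2 by linarith
qed

lemma lmult_two:
  assumes "laurent_poly b"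
  shows "lmult b (\<lambda>k. (if k = d then \<alpha> else 0) + (if k = e then \<beta> else 0)) k
     = \<alpha> * b (k - d) + \<beta> * b (k - e)"
proof -
  let ?S = "{j. b j \<noteq> 0}"
  have f: "finite ?S" using assms unfolding laurent_poly_def .
  have "lmult b (\<lambda>k. (if k = d then \<alpha> else 0) + (if k = e then \<beta> else 0)) k
     = (\<Sum>j\<in>?S. (if j = k - d then \<alpha> * b j else 0) + (if j = k - e then \<beta> * b j else 0))"
    unfolding lmult_def by (intro sum.cong) (auto simp: algebra_simps)
  also have "\<dots> = (\<Sum>j\<in>?S. (if j = k - d then \<alpha> * b j else 0)) + (\<Sum>j\<in>?S. (if j = k - e then \<beta> * b j else 0))"
    by (rule sum.distrib)
  also have "\<dots> = \<alpha> * b (k - d) + \<beta> * b (k - e)"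
    using f by (simp add: sum.delta')
  finally show ?thesis .
qed

theorem lemma3p5:
  fixes a b :: "int \<Rightarrow> complex" and \<epsilon>a \<epsilon>b :: complex and ca cb :: int
  assumes "laurent_poly a" and "laurent_poly b"
    and "\<epsilon>a \<in> {1, -1}" and "\<epsilon>b \<in> {1, -1}"
    and "has_symmetry \<epsilon>a ca a" and "has_symmetry \<epsilon>b cb b"
    and "b \<noteq> (\<lambda>_. 0)"
    and "len a > len b"
  shows "\<exists>q1. laurent_poly q1 \<and> q1 \<noteq> (\<lambda>_. 0) \<and>
           has_symmetry (\<epsilon>a * \<epsilon>b) (ca - cb) q1 \<and>
           (let a1 = (\<lambda>k. a k - lmult b q1 k)
            in len a1 < len a \<and> has_symmetry \<epsilon>a ca a1)"
proof -
  have ea2: "\<epsilon>a * \<epsilon>a = 1" and eb2: "\<epsilon>b * \<epsilon>b = 1" using assms(3,4) by auto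
  have ea0: "\<epsilon>a \<noteq> 0" and eb0: "\<epsilon>b \<noteq> 0" using ea2 eb2 by auto
  have a0: "a \<noteq> (\<lambda>_. 0)" using assms(8) unfolding len_def by auto
  define Sa where "Sa = {k. a k \<noteq> 0}"
  define Sb where "Sb = {k. b k \<noteq> 0}"
  define Ma where "Ma = Max Sa"
  define ma where "ma = Min Sa"
  define Mb where "Mb = Max Sb"
  define mb where "mb = Min Sb"
  have fa: "finite Sa" and fb: "finite Sb" using assms(1,2) unfolding laurent_poly_def Sa_def Sb_def by auto
  have nea: "Sa \<noteq> {}" using a0 unfolding Sa_def by auto
  have neb: "Sb \<noteq> {}" using assms(7) unfolding Sb_def by auto
  have ca: "Ma + ma = ca" unfolding Ma_def ma_def Sa_def using max_min_sym[OF assms(1) a0 assms(5) ea0] .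
  have cb: "Mb + mb = cb" unfolding Mb_def mb_def Sb_def using max_min_sym[OF assms(2,7) assms(6) eb0] .
  have lena: "len a = ereal (real_of_int (Ma - ma))" using a0 unfolding len_def Ma_def ma_def Sa_def by simp
  have lenb: "len b = ereal (real_of_int (Mb - mb))" using assms(7) unfolding len_def Mb_def mb_def Sb_def by simp
  have L: "Mb - mb < Ma - ma" using assms(8) unfolding lena lenb by simp
  have aout: "a k = 0" if "k > Ma \<or> k < ma" for k
    using that fa unfolding Ma_def ma_def Sa_def by (metis Max_ge Min_le linorder_not_le mem_Collect_eq)
  have bout: "b k = 0" if "k > Mb \<or> k < mb" for k
    using that fb unfolding Mb_def mb_def Sb_def by (metis Max_ge Min_le linorder_not_le mem_Collect_eq)
  have bM: "b Mb \<noteq> 0" using fb neb unfolding Mb_def Sb_def using Max_in by fastforce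
  have bm: "b mb = \<epsilon>b * b Mb"
  proof -
    have "cb - mb = Mb" using cb by simp
    thus ?thesis using assms(6) unfolding has_symmetry_def by metis
  qed
  have am: "a ma = \<epsilon>a * a Ma"
  proof -
    have "ca - ma = Ma" using ca by simp
    thus ?thesis using assms(5) unfolding has_symmetry_def by metis
  qed
  define d where "d = Ma - Mb"
  define e where "e = ma - mb"
  define \<alpha> where "\<alpha> = a Ma / b Mb"
  define \<beta> where "\<beta> = \<epsilon>a * \<epsilon>b * \<alpha>"
  have de: "d \<noteq> e" using L unfolding d_def e_def by auto
  define q1 :: "int \<Rightarrow> complex" where "q1 = (\<lambda>k. (if k = d then \<alpha> else 0) + (if k = e then \<beta> else 0))"
  have a0M: "a Ma \<noteq> 0" using fa nea unfolding Ma_def Sa_def using Max_in by fastforce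
  have al0: "\<alpha> \<noteq> 0" using a0M bM unfolding \<alpha>_def by simp
  have lq: "laurent_poly q1" unfolding laurent_poly_def q1_def
    by (rule finite_subset[of _ "{d, e}"]) auto
  have q0: "q1 \<noteq> (\<lambda>_. 0)"
  proof
    assume "q1 = (\<lambda>_. 0)"
    hence "q1 d = 0" by simp
    thus False using de al0 unfolding q1_def by simp
  qed
  have symq: "has_symmetry (\<epsilon>a * \<epsilon>b) (ca - cb) q1"
    unfolding has_symmetry_def
  proof
    fix k
    have ce: "ca - cb - d = e" "ca - cb - e = d" using ca cb unfolding d_def e_def by auto
    have "\<epsilon>a * \<epsilon>b * \<beta> = \<alpha>" unfolding \<beta>_def
      by (metis ea2 eb2 mult.assoc mult.left_commute mult_1)
    moreover have "\<epsilon>a * \<epsilon>b * \<alpha> = \<beta>" unfolding \<beta>_def by simp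
    moreover have "k = d \<Longrightarrow> ca - cb - k = e" "k = e \<Longrightarrow> ca - cb - k = d"
      "k \<noteq> d \<Longrightarrow> k \<noteq> e \<Longrightarrow> ca - cb - k \<noteq> d \<and> ca - cb - k \<noteq> e"
      using ce by auto
    moreover note facts = calculation
    show "q1 k = \<epsilon>a * \<epsilon>b * q1 (ca - cb - k)"
    proof (cases "k = d")
      case True
      hence "q1 k = \<alpha>" "q1 (ca - cb - k) = \<beta>" unfolding q1_def using de facts(3) by auto
      thus ?thesis using facts(1) by simp
    next
      case F: False
      show ?thesis
      proof (cases "k = e")
        case True
        hence "q1 k = \<beta>" "q1 (ca - cb - k) = \<alpha>" unfolding q1_def using de facts(4) by auto
        thus ?thesis using facts(2) by simp
      next
        case False
        hence "q1 k = 0" "q1 (ca - cb - k) = 0" unfolding q1_def using F facts(5) by auto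
        thus ?thesis by simp
      qed
    qed
  qed
  define a1 where "a1 = (\<lambda>k. a k - lmult b q1 k)"
  have a1e: "a1 k = a k - \<alpha> * b (k - d) - \<beta> * b (k - e)" for k
    unfolding a1_def q1_def lmult_two[OF assms(2)] by simp
  have syma1: "has_symmetry \<epsilon>a ca a1"
    unfolding has_symmetry_def
  proof
    fix k
    have 1: "a k = \<epsilon>a * a (ca - k)" using assms(5) unfolding has_symmetry_def by blast
    have i2: "cb - (k - d) = ca - k - e" "cb - (k - e) = ca - k - d"
      using ca cb unfolding d_def e_def by auto
    have 2: "b (k - d) = \<epsilon>b * b (ca - k - e)"
      using assms(6) unfolding has_symmetry_def i2(1)[symmetric] by blast
    have 3: "b (k - e) = \<epsilon>b * b (ca - k - d)"
      using assms(6) unfolding has_symmetry_def i2(2)[symmetric] by blast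
    have "a1 k = \<epsilon>a * a (ca - k) - \<alpha> * \<epsilon>b * b (ca - k - e) - \<beta> * \<epsilon>b * b (ca - k - d)"
      unfolding a1e 1 2 3 by simp
    also have "\<dots> = \<epsilon>a * (a (ca - k) - \<alpha> * b (ca - k - d) - \<beta> * b (ca - k - e))"
    proof -
      have "\<alpha> * \<epsilon>b = \<epsilon>a * \<beta>" unfolding \<beta>_def using ea2 by (simp add: algebra_simps)
      moreover have "\<beta> * \<epsilon>b = \<epsilon>a * \<alpha>" unfolding \<beta>_def using eb2 by (simp add: algebra_simps)
      ultimately have e1: "\<alpha> * \<epsilon>b * X = \<epsilon>a * \<beta> * X" and e2: "\<beta> * \<epsilon>b * X = \<epsilon>a * \<alpha> * X" for X
        by simp_all
      have "\<epsilon>a * a (ca - k) - \<alpha> * \<epsilon>b * b (ca - k - e) - \<beta> * \<epsilon>b * b (ca - k - d)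
          = \<epsilon>a * a (ca - k) - \<epsilon>a * \<beta> * b (ca - k - e) - \<epsilon>a * \<alpha> * b (ca - k - d)"
        by (simp only: e1 e2)
      also have "\<dots> = \<epsilon>a * (a (ca - k) - \<alpha> * b (ca - k - d) - \<beta> * b (ca - k - e))"
        by (simp add: algebra_simps)
      finally show ?thesis .
    qed
    also have "\<dots> = \<epsilon>a * a1 (ca - k)" unfolding a1e by simp
    finally show "a1 k = \<epsilon>a * a1 (ca - k)" .
  qed
  have a1out: "a1 k = 0" if "k \<ge> Ma \<or> k \<le> ma" for k
  proof (cases "k = Ma")
    case True
    have "b (k - e) = 0" using True L bout unfolding e_def by auto
    moreover have "k - d = Mb" using True unfolding d_def by simp
    ultimately show ?thesis unfolding a1e using bM True by (simp add: \<alpha>_def)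
  next
    case F1: False
    show ?thesis
    proof (cases "k = ma")
      case True
      have "b (k - d) = 0" using True L bout unfolding d_def by auto
      moreover have "k - e = mb" using True unfolding e_def by simp
      moreover have "\<beta> * b mb = a ma" unfolding \<beta>_def bm am \<alpha>_def using bM eb2
        by (simp add: field_simps)
      ultimately show ?thesis unfolding a1e using True by simp
    next
      case False
      hence k: "k > Ma \<or> k < ma" using F1 that by auto
      have "a k = 0" using aout k .
      moreover have "b (k - d) = 0" using k L bout unfolding d_def by auto
      moreover have "b (k - e) = 0" using k L bout unfolding e_def by auto
      ultimately show ?thesis unfolding a1e by simp
    qed
  qed
  have lena1: "len a1 < len a"
  proof (cases "a1 = (\<lambda>_. 0)")
    case True
    then show ?thesis unfolding lena len_def using a0 by simp
  next
    case False
    define S1 where "S1 = {k. a1 k \<noteq> 0}"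
    have sub: "S1 \<subseteq> {ma+1..Ma-1}" unfolding S1_def
    proof
      fix k assume "k \<in> {k. a1 k \<noteq> 0}"
      hence "\<not> (k \<ge> Ma \<or> k \<le> ma)" using a1out by auto
      thus "k \<in> {ma+1..Ma-1}" by auto
    qed
    have f1: "finite S1" using sub finite_subset by blast
    have ne1: "S1 \<noteq> {}" using False unfolding S1_def by auto
    have "Max S1 \<le> Ma - 1" using sub f1 ne1 Max_in by fastforce
    moreover have "Min S1 \<ge> ma + 1" using sub f1 ne1 Min_in by fastforce
    ultimately have "Max S1 - Min S1 < Ma - ma" by linarith
    moreover have "len a1 = ereal (real_of_int (Max S1 - Min S1))"
      using False unfolding len_def S1_def by simp
    ultimately show ?thesis unfolding lena by simp
  qed
  show ?thesis
    apply (rule exI[of _ q1])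
    using lq q0 symq lena1 syma1 unfolding a1_def Let_def by auto
qed

end
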